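(* $\operatorname{add}(\mathcal{N})_{\mathrm{game}^*}^{\mathrm{II}} = \mathfrak{c}$. That is, if $\mathcal{A}\subseteq\omega^\omega$ and Player II has a winning strategy in the anti-localizing* game with respect to $\mathcal{A}$, then $|\mathcal{A}|=\mathfrak{c}$ (and such $\mathcal{A}$ of size $\mathfrak{c}$ exist).
   Context: For $k\in\omega$, $[\omega]^{k+1}$ denotes the set of subsets of $\omega$ of size $k+1$. For $\mathcal{A}\subseteq\omega^\omega$, the anti-localizing* game with respect to $\mathcal{A}$: at round $k$, Player I plays $a_k\in[\omega]^{k+1}$ and then Player II plays $n_k\in\omega$. Player II wins iff $\langle n_k:k\in\omega\rangle\in\mathcal{A}$ and $n_k\notin a_k$ for infinitely many $k$. $\operatorname{add}(\mathcal{N})_{\mathrm{game}^*}^{\mathrm{II}}$ is the least $|\mathcal{A}|$ such that Player II has a winning strategy in this game; $\mathfrak{c}=2^{\aleph_0}$. *)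

theory Defs
  imports Main "HOL-Library.Equipollence"
begin

definition legal_I :: "(nat \<Rightarrow> nat set) \<Rightarrow> bool" where
  "legal_I a \<longleftrightarrow> (\<forall>k. finite (a k) \<and> card (a k) = Suc k)"

definition play_II :: "(nat set list \<Rightarrow> nat) \<Rightarrow> (nat \<Rightarrow> nat set) \<Rightarrow> nat \<Rightarrow> nat" where
  "play_II \<sigma> a = (\<lambda>k. \<sigma> (map a [0..<Suc k]))"

definition II_wins :: "(nat \<Rightarrow> nat) set \<Rightarrow> (nat \<Rightarrow> nat set) \<Rightarrow> (nat \<Rightarrow> nat) \<Rightarrow> bool" where
  "II_wins A a n \<longleftrightarrow> n \<in> A \<and> infinite {k. n k \<notin> a k}"

definition winning_strategy_II :: "(nat \<Rightarrow> nat) set \<Rightarrow> (nat set list \<Rightarrow> nat) \<Rightarrow> bool" where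
  "winning_strategy_II A \<sigma> \<longleftrightarrow> (\<forall>a. legal_I a \<longrightarrow> II_wins A a (play_II \<sigma> a))"

end

theory Submission
  imports Defs
begin

definition lg :: "nat set list \<Rightarrow> bool" where
  "lg xs \<longleftrightarrow> (\<forall>i<length xs. finite (xs!i) \<and> card (xs!i) = Suc i)"

lemma lg_ext:
  assumes "lg p" "\<forall>i. length p \<le> i \<longrightarrow> finite (f i) \<and> card (f i) = Suc i"
  shows "lg (p @ map f [length p..<j])"
  unfolding lg_def
proof (intro allI impI)
  fix i assume i: "i < length (p @ map f [length p..<j])"
  show "finite ((p @ map f [length p..<j]) ! i) \<and> card ((p @ map f [length p..<j]) ! i) = Suc i"
  proof (cases "i < length p")
    case True then show ?thesis using assms(1) by (simp add: nth_append lg_def)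
  next
    case False
    then have "(p @ map f [length p..<j]) ! i = f i" using i by (simp add: nth_append)
    then show ?thesis using assms(2) False by simp
  qed
qed

lemma blk:
  "finite (if x \<le> j then {0..j} else insert x {0..<j}) \<and>
   card (if x \<le> j then {0..j} else insert x {0..<j}) = Suc (j::nat) \<and>
   x \<in> (if x \<le> j then {0..j} else insert x {0..<j})"
  by auto

lemma split_lemma:
  assumes W: "winning_strategy_II A \<sigma>" and P: "lg p"
  shows "\<exists>q1 q2. lg (p@q1) \<and> lg (p@q2) \<and> length q1 = length q2 \<and> q1 \<noteq> [] \<and> \<sigma> (p@q1) \<noteq> \<sigma> (p@q2)"
proof (rule ccontr)
  assume "\<not> ?thesis"
  then have H: "\<And>q1 q2. lg (p@q1) \<Longrightarrow> lg (p@q2) \<Longrightarrow> length q1 = length q2 \<Longrightarrow> q1 \<noteq> [] \<Longrightarrow> \<sigma> (p@q1) = \<sigma> (p@q2)"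
    by blast
  define L where "L = length p"
  define c where "c j = map (\<lambda>i. {0..i}) [L..<Suc j]" for j :: nat
  define m where "m j = \<sigma> (p @ c j)" for j
  define a where "a j = (if j < L then p!j else (if m j \<le> j then {0..j} else insert (m j) {0..<j}))" for j
  have la: "legal_I a" unfolding legal_I_def
  proof
    fix k show "finite (a k) \<and> card (a k) = Suc k"
    proof (cases "k < L")
      case True
      then have "a k = p!k" by (simp add: a_def)
      then show ?thesis using True P unfolding lg_def L_def by simp
    next
      case False
      then have "a k = (if m k \<le> k then {0..k} else insert (m k) {0..<k})" by (simp add: a_def)
      then show ?thesis using blk[of "m k" k] by (simp only:)
    qed
  qed
  have fa: "\<forall>i. length p \<le> i \<longrightarrow> finite (a i) \<and> card (a i) = Suc i"
    using la by (simp add: legal_I_def)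
  have fc: "\<forall>i. length p \<le> i \<longrightarrow> finite ({0..i::nat}) \<and> card {0..i} = Suc i" by simp
  have mapa: "map a [0..<Suc j] = p @ map a [L..<Suc j]" if "L \<le> j" for j
  proof -
    have "[0..<Suc j] = [0..<L] @ [L..<Suc j]" using that
      using upt_add_eq_append[of 0 L "Suc j - L"] by (metis le_SucI le_add_diff_inverse zero_le)
    moreover have "map a [0..<L] = p" 
    proof (rule nth_equalityI)
      show "length (map a [0..<L]) = length p" by (simp add: L_def)
    next
      fix i assume "i < length (map a [0..<L])"
      then have "i < L" by simp
      then show "map a [0..<L] ! i = p ! i" by (simp add: a_def)
    qed
    ultimately show ?thesis by (metis map_append)
  qed
  have pl: "play_II \<sigma> a j = m j" if "L \<le> j" for j
  proof -
    have "play_II \<sigma> a j = \<sigma> (p @ map a [L..<Suc j])" unfolding play_II_def using mapa[OF that] by (simp only:)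
    also have "\<dots> = \<sigma> (p @ c j)"
      apply (rule H)
      using lg_ext[OF P fa, of "Suc j"] lg_ext[OF P fc, of "Suc j"] that
      by (auto simp: c_def L_def)
    finally show ?thesis by (simp add: m_def)
  qed
  have "{k. play_II \<sigma> a k \<notin> a k} \<subseteq> {..<L}"
  proof
    fix k assume k: "k \<in> {k. play_II \<sigma> a k \<notin> a k}"
    show "k \<in> {..<L}"
    proof (rule ccontr)
      assume "k \<notin> {..<L}"
      then have "L \<le> k" by simp
      then have "play_II \<sigma> a k \<in> a k" using pl[of k] blk[of "m k" k] by (simp add: a_def)
      then show False using k by simp
    qed
  qed
  then have "finite {k. play_II \<sigma> a k \<notin> a k}" using finite_subset by blast
  then show False using W la unfolding winning_strategy_II_def II_wins_def by blast
qed


primrec node :: "(nat set list \<Rightarrow> nat set list) \<Rightarrow> (nat set list \<Rightarrow> nat set list) \<Rightarrow> (nat \<Rightarrow> bool) \<Rightarrow> nat \<Rightarrow> nat set list" where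
  "node E1 E2 b 0 = []"
| "node E1 E2 b (Suc n) = node E1 E2 b n @ (if b n then E1 (node E1 E2 b n) else E2 (node E1 E2 b n))"

lemma aux_len: "xs \<noteq> [] \<Longrightarrow> n \<le> length p \<Longrightarrow> Suc n \<le> length p + length xs"
  by (cases xs) auto

locale tree =
  fixes E1 E2 :: "nat set list \<Rightarrow> nat set list"
  assumes E: "\<And>p. lg p \<Longrightarrow> lg (p @ E1 p) \<and> lg (p @ E2 p) \<and> length (E1 p) = length (E2 p) \<and> E1 p \<noteq> []"
begin

lemma node_lg: "lg (node E1 E2 b n)"
proof (induction n)
  case 0 then show ?case by (simp add: lg_def)
next
  case (Suc n) then show ?case using E[OF Suc.IH] by simp
qed

lemma node_len: "n \<le> length (node E1 E2 b n)"
proof (induction n)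
  case 0 then show ?case by simp
next
  case (Suc n)
  have "E1 (node E1 E2 b n) \<noteq> []" "E2 (node E1 E2 b n) \<noteq> []"
    using E[OF node_lg[of b n]] by auto
  then show ?case using Suc aux_len by (cases "b n") auto
qed

lemma node_prefix: "n \<le> m \<Longrightarrow> \<exists>r. node E1 E2 b m = node E1 E2 b n @ r"
proof (induction m rule: dec_induct)
  case base then show ?case by simp
next
  case (step m) then show ?case by auto
qed

definition pl :: "(nat \<Rightarrow> bool) \<Rightarrow> nat \<Rightarrow> nat set" where
  "pl b k = node E1 E2 b (Suc k) ! k"

lemma pl_nth: "k < length (node E1 E2 b n) \<Longrightarrow> pl b k = node E1 E2 b n ! k"
proof -
  assume k: "k < length (node E1 E2 b n)"
  obtain r1 where r1: "node E1 E2 b (max n (Suc k)) = node E1 E2 b n @ r1"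
    using node_prefix[of n "max n (Suc k)" b] max.cobounded1 by blast
  obtain r2 where r2: "node E1 E2 b (max n (Suc k)) = node E1 E2 b (Suc k) @ r2"
    using node_prefix[of "Suc k" "max n (Suc k)" b] max.cobounded2 by blast
  have k2: "k < length (node E1 E2 b (Suc k))" using node_len[of "Suc k" b] by simp
  have "node E1 E2 b (max n (Suc k)) ! k = node E1 E2 b n ! k" unfolding r1 using k by (rule nth_append_left)
  moreover have "node E1 E2 b (max n (Suc k)) ! k = node E1 E2 b (Suc k) ! k" unfolding r2 using k2 by (rule nth_append_left)
  ultimately show ?thesis by (simp add: pl_def)
qed

lemma pl_legal: "legal_I (pl b)"
  unfolding legal_I_def
proof
  fix k
  have k2: "k < length (node E1 E2 b (Suc k))" using node_len[of "Suc k" b] by simp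
  then show "finite (pl b k) \<and> card (pl b k) = Suc k"
    using node_lg[of b "Suc k"] unfolding lg_def pl_def by blast
qed

lemma pl_map: "map (pl b) [0..<length (node E1 E2 b n)] = node E1 E2 b n"
proof (rule nth_equalityI)
  show "length (map (pl b) [0..<length (node E1 E2 b n)]) = length (node E1 E2 b n)" by simp
next
  fix i assume "i < length (map (pl b) [0..<length (node E1 E2 b n)])"
  then have "i < length (node E1 E2 b n)" by simp
  then show "map (pl b) [0..<length (node E1 E2 b n)] ! i = node E1 E2 b n ! i"
    by (simp add: pl_nth)
qed

lemma node_eq: "k \<le> n \<Longrightarrow> (\<forall>i<n. b i = b' i) \<Longrightarrow> node E1 E2 b k = node E1 E2 b' k"
  by (induction k) auto

end

lemma lower:
  assumes W: "winning_strategy_II A \<sigma>"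
  shows "(UNIV :: nat set set) \<lesssim> A"
proof -
  have "\<forall>p. \<exists>q. lg p \<longrightarrow> lg (p@fst q) \<and> lg (p@snd q) \<and> length (fst q) = length (snd q) \<and> fst q \<noteq> [] \<and> \<sigma> (p@fst q) \<noteq> \<sigma> (p@snd q)"
    using split_lemma[OF W] by fastforce
  then obtain Q where Q: "\<And>p. lg p \<Longrightarrow> lg (p@fst (Q p)) \<and> lg (p@snd (Q p)) \<and> length (fst (Q p)) = length (snd (Q p)) \<and> fst (Q p) \<noteq> [] \<and> \<sigma> (p@fst (Q p)) \<noteq> \<sigma> (p@snd (Q p))"
    by metis
  define E1 where "E1 p = fst (Q p)" for p
  define E2 where "E2 p = snd (Q p)" for p
  interpret tree E1 E2
    by unfold_locales (use Q in \<open>auto simp: E1_def E2_def\<close>)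
  define F where "F S = play_II \<sigma> (pl (\<lambda>x. x \<in> S))" for S :: "nat set"
  have FA: "F S \<in> A" for S
    using W pl_legal unfolding winning_strategy_II_def II_wins_def F_def by blast
  have key: "play_II \<sigma> (pl b) \<noteq> play_II \<sigma> (pl b')" if "b \<noteq> b'" for b b'
  proof -
    have ex: "\<exists>n. b n \<noteq> b' n" using that by auto
    define n where "n = (LEAST n. b n \<noteq> b' n)"
    have n: "b n \<noteq> b' n" "\<forall>i<n. b i = b' i"
      using LeastI_ex[OF ex] not_less_Least unfolding n_def by auto
    define p where "p = node E1 E2 b n"
    have pp: "node E1 E2 b' n = p" unfolding p_def using node_eq[of n n b b'] n by simp
    have lp: "lg p" unfolding p_def by (rule node_lg)
    note Qp = Q[OF lp]
    have nb: "node E1 E2 b (Suc n) = p @ (if b n then E1 p else E2 p)" by (simp add: p_def)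
    have nb': "node E1 E2 b' (Suc n) = p @ (if b' n then E1 p else E2 p)" using pp by simp
    have len: "length (node E1 E2 b (Suc n)) = length (node E1 E2 b' (Suc n))"
      using nb nb' Qp by (simp add: E1_def E2_def)
    have dif: "\<sigma> (node E1 E2 b (Suc n)) \<noteq> \<sigma> (node E1 E2 b' (Suc n))"
      using nb nb' Qp n(1) by (cases "b n") (auto simp: E1_def E2_def)
    define L where "L = length (node E1 E2 b (Suc n))"
    have L1: "Suc (L - 1) = L" using node_len[of "Suc n" b] by (simp add: L_def)
    have "play_II \<sigma> (pl b) (L - 1) = \<sigma> (node E1 E2 b (Suc n))"
      unfolding play_II_def L1 unfolding L_def by (simp only: pl_map)
    moreover have "play_II \<sigma> (pl b') (L - 1) = \<sigma> (node E1 E2 b' (Suc n))"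
      unfolding play_II_def L1 unfolding L_def len by (simp only: pl_map)
    ultimately show ?thesis using dif by auto
  qed
  have "inj F"
  proof
    fix S T assume "F S = F T"
    show "S = T"
    proof (rule ccontr)
      assume "S \<noteq> T"
      then have "(\<lambda>x. x \<in> S) \<noteq> (\<lambda>x. x \<in> T)" by (auto simp: fun_eq_iff)
      then show False using key \<open>F S = F T\<close> unfolding F_def by blast
    qed
  qed
  then show ?thesis unfolding lepoll_def using FA by blast
qed

lemma upper: "(A :: (nat \<Rightarrow> nat) set) \<lesssim> (UNIV :: nat set set)"
proof -
  define G where "G f = range (\<lambda>i. prod_encode (i, f i))" for f :: "nat \<Rightarrow> nat"
  have "inj G"
  proof
    fix f g assume eq: "G f = G g"
    show "f = g"
    proof
      fix i
      have "prod_encode (i, f i) \<in> G g" using eq unfolding G_def by auto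
      then obtain j where "prod_encode (i, f i) = prod_encode (j, g j)" unfolding G_def by auto
      then show "f i = g i" using inj_prod_encode[of UNIV] by (auto dest: injD)
    qed
  qed
  then show ?thesis unfolding lepoll_def by (meson inj_on_subset subset_UNIV)
qed

lemma strat_UNIV: "winning_strategy_II UNIV (\<lambda>xs. Suc (Max (last xs)))"
  unfolding winning_strategy_II_def II_wins_def
proof (intro allI impI conjI)
  fix a assume la: "legal_I a"
  have "{k. play_II (\<lambda>xs. Suc (Max (last xs))) a k \<notin> a k} = UNIV"
  proof -
    have "Suc (Max (a k)) \<notin> a k" for k
    proof
      assume "Suc (Max (a k)) \<in> a k"
      moreover have "finite (a k)" using la by (simp add: legal_I_def)
      ultimately have "Suc (Max (a k)) \<le> Max (a k)" by (rule Max_ge[rotated])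
      then show False by simp
    qed
    moreover have "last (map a [0..<Suc k]) = a k" for k by simp
    ultimately show ?thesis by (simp add: play_II_def)
  qed
  then show "infinite {k. play_II (\<lambda>xs. Suc (Max (last xs))) a k \<notin> a k}" by simp
qed simp

theorem mainTheorem11:
  shows "(\<forall>A :: (nat \<Rightarrow> nat) set. (\<exists>\<sigma>. winning_strategy_II A \<sigma>) \<longrightarrow> A \<approx> (UNIV :: nat set set))
       \<and> (\<exists>A :: (nat \<Rightarrow> nat) set. (\<exists>\<sigma>. winning_strategy_II A \<sigma>) \<and> A \<approx> (UNIV :: nat set set))"
proof -
  have 1: "\<forall>A :: (nat \<Rightarrow> nat) set. (\<exists>\<sigma>. winning_strategy_II A \<sigma>) \<longrightarrow> A \<approx> (UNIV :: nat set set)"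
    using lower upper lepoll_antisym by blast
  then show ?thesis using strat_UNIV by blast
qed

end
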